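(* Let $G$ be a group, let $k\geqslant 1$ and $\alpha,\beta>0$. Suppose $U$ is a $k$-approximate group in $G$ satisfying $|U^n|\geqslant(\alpha|U|)^{\beta n}$ for every $n\in\mathbb{N}$. Then $|U|\leqslant k^{\lceil 2/\beta\rceil-1}/\alpha^2$.
   Context: A finite symmetric subset $U\subset G$ is a $k$-approximate group if there is a finite subset $X\subset G$ with $|X|\leqslant k$ and $U^2\subset XU$. Here $U^n=\{u_1\cdots u_n:u_i\in U\}$. *)

theory Defs
  imports Complex_Main "HOL-Algebra.Coset"
begin

fun set_pow :: "('a, 'b) monoid_scheme \<Rightarrow> 'a set \<Rightarrow> nat \<Rightarrow> 'a set" where
  "set_pow G U 0 = {\<one>\<^bsub>G\<^esub>}"
| "set_pow G U (Suc n) = set_pow G U n <#>\<^bsub>G\<^esub> U"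

definition approx_group :: "('a, 'b) monoid_scheme \<Rightarrow> real \<Rightarrow> 'a set \<Rightarrow> bool" where
  "approx_group G k U \<longleftrightarrow>
     U \<subseteq> carrier G \<and> finite U \<and> (\<forall>u\<in>U. inv\<^bsub>G\<^esub> u \<in> U) \<and>
     (\<exists>X. X \<subseteq> carrier G \<and> finite X \<and> real (card X) \<le> k \<and>
          set_pow G U 2 \<subseteq> X <#>\<^bsub>G\<^esub> U)"

end

theory Submission
  imports Defs
begin

lemma set_mult_mono_l: "A \<subseteq> A' \<Longrightarrow> A <#>\<^bsub>G\<^esub> B \<subseteq> A' <#>\<^bsub>G\<^esub> B"
  unfolding set_mult_def by blast

lemma set_mult_mono_r: "B \<subseteq> B' \<Longrightarrow> A <#>\<^bsub>G\<^esub> B \<subseteq> A <#>\<^bsub>G\<^esub> B'"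
  unfolding set_mult_def by blast

lemma set_mult_card:
  assumes "finite A" "finite B"
  shows "card (A <#>\<^bsub>G\<^esub> B) \<le> card A * card B"
proof -
  have "A <#>\<^bsub>G\<^esub> B = (\<lambda>(a,b). a \<otimes>\<^bsub>G\<^esub> b) ` (A \<times> B)"
    unfolding set_mult_def by auto
  then have "card (A <#>\<^bsub>G\<^esub> B) \<le> card (A \<times> B)"
    using card_image_le assms by (metis finite_cartesian_product)
  then show ?thesis by (simp add: card_cartesian_product)
qed

lemma set_pow_finite: "finite U \<Longrightarrow> finite (set_pow G U n)"
  by (induction n) (auto simp: set_mult_def)

lemma set_pow_card: "finite U \<Longrightarrow> card (set_pow G U n) \<le> card U ^ n"
proof (induction n)
  case 0 then show ?case by simp
next
  case (Suc n)
  have "card (set_pow G U (Suc n)) \<le> card (set_pow G U n) * card U"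
    using set_mult_card[OF set_pow_finite[OF Suc.prems] Suc.prems] by simp
  also have "\<dots> \<le> card U ^ n * card U" using Suc by simp
  finally show ?case by (simp add: mult.commute)
qed

lemma (in group) set_pow_carrier: "U \<subseteq> carrier G \<Longrightarrow> set_pow G U n \<subseteq> carrier G"
  by (induction n) (auto simp: set_mult_def)

lemma (in group) set_pow_cover:
  assumes U: "U \<subseteq> carrier G" and X: "X \<subseteq> carrier G"
    and cov: "set_pow G U 2 \<subseteq> X <#> U"
  shows "set_pow G U (Suc n) \<subseteq> set_pow G X n <#> U"
proof (induction n)
  case 0
  have "{\<one>} <#> U = U" using U by (auto simp: set_mult_def) (metis l_one subsetD)
  then show ?case by simp
next
  case (Suc n)
  have UU: "U <#> U \<subseteq> X <#> U"
  proof -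
    have "{\<one>} <#> U = U" using U by (auto simp: set_mult_def) (metis l_one subsetD)
    then show ?thesis using cov by (simp add: numeral_2_eq_2)
  qed
  have Y: "set_pow G X n \<subseteq> carrier G" using set_pow_carrier[OF X] .
  have "set_pow G U (Suc (Suc n)) = set_pow G U (Suc n) <#> U" by simp
  also have "\<dots> \<subseteq> (set_pow G X n <#> U) <#> U" using Suc set_mult_mono_l by blast
  also have "\<dots> = set_pow G X n <#> (U <#> U)" using set_mult_assoc[OF Y U U] .
  also have "\<dots> \<subseteq> set_pow G X n <#> (X <#> U)" using UU set_mult_mono_r by blast
  also have "\<dots> = (set_pow G X n <#> X) <#> U" using set_mult_assoc[OF Y X U] by simp
  finally show ?case by simp
qed

theorem proposition2p13:
  fixes G :: "('a, 'b) monoid_scheme" and k \<alpha> \<beta> :: real and U :: "'a set"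
  assumes "group G" and "k \<ge> 1" and "\<alpha> > 0" and "\<beta> > 0"
    and "approx_group G k U"
    and "\<And>n::nat. real (card (set_pow G U n)) \<ge> (\<alpha> * real (card U)) powr (\<beta> * real n)"
  shows "real (card U) \<le> k ^ nat (\<lceil>2 / \<beta>\<rceil> - 1) / \<alpha> ^ 2"
proof -
  interpret group G by fact
  obtain X where U: "U \<subseteq> carrier G" "finite U" and X: "X \<subseteq> carrier G" "finite X"
    "real (card X) \<le> k" "set_pow G U 2 \<subseteq> X <#>\<^bsub>G\<^esub> U"
    using assms(5) unfolding approx_group_def by blast
  define m where "m = nat \<lceil>2 / \<beta>\<rceil>"
  have m1: "m \<ge> 1"
  proof -
    have "2 / \<beta> > 0" using assms(4) by simp
    then have "\<lceil>2 / \<beta>\<rceil> \<ge> 1" by (simp add: order.strict_iff_not ceiling_le_zero)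
    then have "nat \<lceil>2 / \<beta>\<rceil> \<ge> nat 1" by (rule nat_mono)
    then show ?thesis unfolding m_def by simp
  qed
  have e: "nat (\<lceil>2 / \<beta>\<rceil> - 1) = m - 1" unfolding m_def by (simp add: nat_diff_distrib)
  have bm: "\<beta> * real m \<ge> 2"
  proof -
    have "real m \<ge> 2 / \<beta>" unfolding m_def by linarith
    then show ?thesis using assms(4) by (simp add: field_simps)
  qed
  define c where "c = real (card U)"
  have kp: "k ^ (m - 1) \<ge> 1" using assms(2) by simp
  have bound: "real (card (set_pow G U m)) \<le> k ^ (m - 1) * c"
  proof -
    have sub: "set_pow G U (Suc (m - 1)) \<subseteq> set_pow G X (m - 1) <#>\<^bsub>G\<^esub> U"
      using set_pow_cover[OF U(1) X(1) X(4)] .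
    have "card (set_pow G U m) \<le> card (set_pow G X (m - 1) <#>\<^bsub>G\<^esub> U)"
    proof -
      have "finite (set_pow G X (m - 1) <#>\<^bsub>G\<^esub> U)"
        using set_pow_finite[OF X(2)] U(2) by (auto simp: set_mult_def)
      moreover have "Suc (m - 1) = m" using m1 by simp
      ultimately show ?thesis using card_mono sub by metis
    qed
    also have "\<dots> \<le> card (set_pow G X (m - 1)) * card U"
      using set_mult_card[OF set_pow_finite[OF X(2)] U(2)] .
    also have "\<dots> \<le> card X ^ (m - 1) * card U"
      using set_pow_card[OF X(2), of G "m - 1"] by (intro mult_right_mono) auto
    finally have "real (card (set_pow G U m)) \<le> real (card X) ^ (m - 1) * c"
      unfolding c_def by (metis of_nat_le_iff of_nat_mult of_nat_power)
    also have "\<dots> \<le> k ^ (m - 1) * c"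
      using X(3) c_def by (intro mult_right_mono power_mono) auto
    finally show ?thesis .
  qed
  show ?thesis
  proof (cases "\<alpha> * c \<le> 1")
    case True
    show ?thesis
    proof (cases "c = 0")
      case True then show ?thesis using assms(2) unfolding c_def by simp
    next
      case False
      then have c1: "c \<ge> 1" unfolding c_def by simp
      have "\<alpha> * 1 \<le> \<alpha> * c" using c1 assms(3) by (intro mult_left_mono) auto
      then have a1: "\<alpha> \<le> 1" using True by simp
      have "c \<le> 1 / \<alpha>" using True assms(3) by (simp add: field_simps mult.commute)
      also have "\<dots> \<le> 1 / \<alpha>^2" using a1 assms(3)
        by (simp add: field_simps power2_eq_square mult_le_cancel_left1)
      also have "\<dots> \<le> k ^ (m - 1) / \<alpha>^2" using kp assms(3)
        by (simp add: divide_right_mono)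
      finally show ?thesis unfolding e c_def .
    qed
  next
    case False
    let ?x = "\<alpha> * c"
    have "?x ^ 2 = ?x powr 2" using False by (simp add: powr_realpow)
    also have "\<dots> \<le> ?x powr (\<beta> * real m)" using False bm by (intro powr_mono) auto
    also have "\<dots> \<le> k ^ (m - 1) * c" using assms(6)[of m] bound c_def by simp
    finally have "\<alpha>^2 * c * c \<le> k ^ (m - 1) * c" by (simp add: power2_eq_square algebra_simps)
    moreover have "c > 0"
    proof (rule ccontr)
      assume "\<not> c > 0"
      then have "c = 0" using c_def by simp
      then show False using False by simp
    qed
    ultimately have "\<alpha>^2 * c \<le> k ^ (m - 1)" by simp
    then show ?thesis unfolding e c_def[symmetric] using assms(3)
      by (simp add: field_simps)
  qed
qed

end
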